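(* Let $S\ge 1$ be an integer, let $Q_{\boldsymbol{X}}$ be a probability distribution on a covariate space $\mathcal{X}$, and let $\tau^{(1)},\ldots,\tau^{(S)}\in L_2(Q_{\boldsymbol{X}})$. Let $\mathcal{F}\subset L_2(Q_{\boldsymbol{X}})$ be a model class that contains the convex hull of $\{\tau^{(1)},\ldots,\tau^{(S)}\}$. Consider the minimax problem \[ f_{\text{regret}}^*=\underset{f\in\mathcal{F}}{\arg\min}\ \max_{Q\in\mathcal{C}(Q_{\boldsymbol{X}})}\ \mathbb{E}_{Q_{\boldsymbol{X}}}\big[(f(\boldsymbol{X})-\tau_Q(\boldsymbol{X}))^2\big]. \] This problem can be equivalently expressed as \[ \{f_{\text{regret}}^*, R^*\}=\underset{f\in\mathcal{F},\,R\in\mathbb{R}}{\arg\min}\ R\quad\text{subject to}\quad \mathbb{E}_{Q_{\boldsymbol{X}}}\big[(f(\boldsymbol{X})-\tau^{(s)}(\boldsymbol{X}))^2\big]\le R\ \text{ for all } s\in\{1,\ldots,S\}, \] where $R^*$ denotes the smallest worst-case value achieved by $f_{\text{regret}}^*$. Furthermore, the solution $\{f_{\text{regret}}^*,R^*\}$ exists and there exist $q_1^*,\ldots,q_S^*$ such that \[ f_{\text{regret}}^*(\cdot)=\sum_{s=1}^S q_s^*\,\tau^{(s)}(\cdot), \] \[ q_s^*\Big(\mathbb{E}_{Q_{\boldsymbol{X}}}\big[(f_{\text{regret}}^*(\boldsymbol{X})-\tau^{(s)}(\boldsymbol{X}))^2\big]-R^*\Big)=0\quad\text{for all } s, \] \[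 \mathbb{E}_{Q_{\boldsymbol{X}}}\big[(f_{\text{regret}}^*(\boldsymbol{X})-\tau^{(s)}(\boldsymbol{X}))^2\big]\le R^*\quad\text{for all } s, \] \[ \sum_{s=1}^S q_s^*=1,\qquad q_s^*\ge 0\ \text{ for all } s. \]
   Context: Setting: there are $S$ source sites; site $s$ has a joint distribution $P^{(s)}$ of potential outcomes $(Y(1),Y(0))$ and covariates $\boldsymbol{X}\in\mathcal{X}$, with site-specific conditional average treatment effect (CATE) $\tau^{(s)}(\boldsymbol{x})=\mathbb{E}_{P^{(s)}}[Y(1)-Y(0)\mid \boldsymbol{X}=\boldsymbol{x}]$. For a joint distribution $Q$ of $(Y(1),Y(0),\boldsymbol{X})$, $\tau_Q(\boldsymbol{x})=\mathbb{E}_Q[Y(1)-Y(0)\mid\boldsymbol{X}=\boldsymbol{x}]$. $\Delta_{S-1}=\{\boldsymbol{q}\in\mathbb{R}^S:\sum_s q_s=1,\ \min_s q_s\ge 0\}$. The multisite uncertainty set is $\mathcal{C}(Q_{\boldsymbol{X}})=\{Q=(Q_{\boldsymbol{X}},Q_{(Y(1),Y(0))\mid\boldsymbol{X}}):\ \tau_Q(\cdot)=\sum_{s=1}^S q_s\tau^{(s)}(\cdot)\text{ for some }\boldsymbol{q}\in\Delta_{S-1}\}$, i.e. all joint distributions with covariate marginal $Q_{\boldsymbol{X}}$ whose CATE is a convex combination of the site CATEs. $L_2(Q_{\boldsymbol{X}})$ is the space of square-integrable measurable functions with respect to $Q_{\boldsymbol{X}}$. *)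

theory Defs
  imports "HOL-Probability.Probability"
begin

definition L2fun :: "'a measure \<Rightarrow> ('a \<Rightarrow> real) set" where
  "L2fun M = {f. f \<in> borel_measurable M \<and> integrable M (\<lambda>x. (f x)^2)}"

definition prob_simplex :: "nat \<Rightarrow> (nat \<Rightarrow> real) set" where
  "prob_simplex S = {q. (\<forall>s\<in>{1..S}. 0 \<le> q s) \<and> (\<Sum>s\<in>{1..S}. q s) = 1}"

definition mix :: "nat \<Rightarrow> (nat \<Rightarrow> 'a \<Rightarrow> real) \<Rightarrow> (nat \<Rightarrow> real) \<Rightarrow> 'a \<Rightarrow> real" where
  "mix S tau q = (\<lambda>x. \<Sum>s\<in>{1..S}. q s * tau s x)"

text \<open>The set of CATE functions tau_Q of the distributions Q in the multisite
  uncertainty set C(Q_X): exactly the convex combinations of the site CATEs.\<close>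
definition cate_set :: "nat \<Rightarrow> (nat \<Rightarrow> 'a \<Rightarrow> real) \<Rightarrow> ('a \<Rightarrow> real) set" where
  "cate_set S tau = mix S tau ` prob_simplex S"

definition mse :: "'a measure \<Rightarrow> ('a \<Rightarrow> real) \<Rightarrow> ('a \<Rightarrow> real) \<Rightarrow> real" where
  "mse M f g = (\<integral>x. (f x - g x)^2 \<partial>M)"

definition worst_risk :: "'a measure \<Rightarrow> nat \<Rightarrow> (nat \<Rightarrow> 'a \<Rightarrow> real) \<Rightarrow> ('a \<Rightarrow> real) \<Rightarrow> real" where
  "worst_risk M S tau f = (SUP g \<in> cate_set S tau. mse M f g)"

definition regret_argmin :: "'a measure \<Rightarrow> nat \<Rightarrow> (nat \<Rightarrow> 'a \<Rightarrow> real) \<Rightarrow> ('a \<Rightarrow> real) set \<Rightarrow> ('a \<Rightarrow> real) set" where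
  "regret_argmin M S tau F =
     {f \<in> F. \<forall>g\<in>F. worst_risk M S tau f \<le> worst_risk M S tau g}"

definition epi_feasible :: "'a measure \<Rightarrow> nat \<Rightarrow> (nat \<Rightarrow> 'a \<Rightarrow> real) \<Rightarrow> ('a \<Rightarrow> real) set \<Rightarrow> (('a \<Rightarrow> real) \<times> real) set" where
  "epi_feasible M S tau F =
     {(f, R). f \<in> F \<and> (\<forall>s\<in>{1..S}. mse M f (tau s) \<le> R)}"

definition epi_argmin :: "'a measure \<Rightarrow> nat \<Rightarrow> (nat \<Rightarrow> 'a \<Rightarrow> real) \<Rightarrow> ('a \<Rightarrow> real) set \<Rightarrow> (('a \<Rightarrow> real) \<times> real) set" where
  "epi_argmin M S tau F =
     {(f, R) \<in> epi_feasible M S tau F. \<forall>(g, R') \<in> epi_feasible M S tau F. R \<le> R'}"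

end

theory Submission
  imports Defs
begin


definition ip :: "'a measure \<Rightarrow> ('a \<Rightarrow> real) \<Rightarrow> ('a \<Rightarrow> real) \<Rightarrow> real" where
  "ip M u v = (\<integral>x. u x * v x \<partial>M)"

lemma L2_meas: "u \<in> L2fun M \<Longrightarrow> u \<in> borel_measurable M"
  by (simp add: L2fun_def)

lemma L2_sq: "u \<in> L2fun M \<Longrightarrow> integrable M (\<lambda>x. (u x)^2)"
  by (simp add: L2fun_def)

lemma L2_prod_int:
  assumes "u \<in> L2fun M" "v \<in> L2fun M"
  shows "integrable M (\<lambda>x. u x * v x)"
proof (rule Bochner_Integration.integrable_bound)
  show "integrable M (\<lambda>x. (u x)^2 + (v x)^2)"
    using assms by (simp add: L2_sq)
  have [measurable]: "u \<in> borel_measurable M" "v \<in> borel_measurable M"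
    using assms by (auto simp: L2_meas)
  show "(\<lambda>x. u x * v x) \<in> borel_measurable M"
    by measurable
  show "AE x in M. norm (u x * v x) \<le> norm ((u x)^2 + (v x)^2)"
  proof (rule AE_I2)
    fix x
    have "0 \<le> (\<bar>u x\<bar> - \<bar>v x\<bar>)^2" by simp
    also have "(\<bar>u x\<bar> - \<bar>v x\<bar>)^2 = (u x)^2 - 2*(\<bar>u x\<bar>*\<bar>v x\<bar>) + (v x)^2"
      by (simp add: power2_diff)
    finally have "2*(\<bar>u x\<bar>*\<bar>v x\<bar>) \<le> (u x)^2 + (v x)^2" by simp
    moreover have "0 \<le> \<bar>u x\<bar>*\<bar>v x\<bar>" by simp
    ultimately have "\<bar>u x\<bar>*\<bar>v x\<bar> \<le> (u x)^2 + (v x)^2" by linarith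
    then show "norm (u x * v x) \<le> norm ((u x)^2 + (v x)^2)"
      by (simp add: abs_mult)
  qed
qed

lemma L2_lin:
  assumes "u \<in> L2fun M" "v \<in> L2fun M"
  shows "(\<lambda>x. a * u x + b * v x) \<in> L2fun M"
proof -
  have e: "(\<lambda>x. (a * u x + b * v x)^2) = (\<lambda>x. a^2 * (u x)^2 + (2*a*b) * (u x * v x) + b^2 * (v x)^2)"
    by (auto simp: power2_eq_square algebra_simps)
  have [measurable]: "u \<in> borel_measurable M" "v \<in> borel_measurable M"
    using assms by (auto simp: L2_meas)
  have "(\<lambda>x. a * u x + b * v x) \<in> borel_measurable M" by measurable
  then show ?thesis
    unfolding L2fun_def using assms
    by (simp add: e L2_sq L2_prod_int)
qed

lemma L2_zero: "(\<lambda>x. 0) \<in> L2fun M"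
  by (simp add: L2fun_def)

lemma L2_sum:
  assumes "finite I" "\<forall>i\<in>I. u i \<in> L2fun M"
  shows "(\<lambda>x. \<Sum>i\<in>I. c i * u i x) \<in> L2fun M"
  using assms
proof (induction I rule: finite_induct)
  case empty then show ?case by (simp add: L2_zero)
next
  case (insert j I)
  then have "(\<lambda>x. c j * u j x + 1 * (\<Sum>i\<in>I. c i * u i x)) \<in> L2fun M"
    by (intro L2_lin) auto
  then show ?case using insert by simp
qed

lemma L2_mix: "\<forall>s\<in>{1..S}. tau s \<in> L2fun M \<Longrightarrow> mix S tau q \<in> L2fun M"
  unfolding mix_def by (rule L2_sum) auto

lemma ip_sym: "ip M u v = ip M v u"
  by (simp add: ip_def mult.commute)

lemma ip_lin:
  assumes "u \<in> L2fun M" "v \<in> L2fun M" "w \<in> L2fun M"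
  shows "ip M (\<lambda>x. a * u x + b * v x) w = a * ip M u w + b * ip M v w"
proof -
  have "ip M (\<lambda>x. a * u x + b * v x) w = (\<integral>x. a * (u x * w x) + b * (v x * w x) \<partial>M)"
    unfolding ip_def by (simp add: algebra_simps)
  also have "\<dots> = a * ip M u w + b * ip M v w"
    unfolding ip_def using assms by (simp add: L2_prod_int)
  finally show ?thesis .
qed

lemma ip_sum:
  assumes "finite I" "\<forall>i\<in>I. u i \<in> L2fun M" "w \<in> L2fun M"
  shows "ip M (\<lambda>x. \<Sum>i\<in>I. c i * u i x) w = (\<Sum>i\<in>I. c i * ip M (u i) w)"
  using assms
proof (induction I rule: finite_induct)
  case empty then show ?case by (simp add: ip_def)
next
  case (insert j I)
  have uj: "u j \<in> L2fun M" and uI: "\<forall>i\<in>I. u i \<in> L2fun M" using insert.prems by auto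
  have IH: "ip M (\<lambda>x. \<Sum>i\<in>I. c i * u i x) w = (\<Sum>i\<in>I. c i * ip M (u i) w)"
    using insert.IH uI insert.prems(2) by blast
  have sI: "(\<lambda>x. \<Sum>i\<in>I. c i * u i x) \<in> L2fun M" using insert(1) uI by (rule L2_sum)
  have "ip M (\<lambda>x. \<Sum>i\<in>insert j I. c i * u i x) w = ip M (\<lambda>x. c j * u j x + 1 * (\<Sum>i\<in>I. c i * u i x)) w"
    using insert(1,2) by (simp add: ip_def)
  also have "\<dots> = c j * ip M (u j) w + 1 * ip M (\<lambda>x. \<Sum>i\<in>I. c i * u i x) w"
    by (rule ip_lin[OF uj sI insert.prems(2)])
  also have "\<dots> = (\<Sum>i\<in>insert j I. c i * ip M (u i) w)"
    unfolding IH using insert(1,2) by simp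
  finally show ?case .
qed


lemma mse_ip: "mse M u v = ip M (\<lambda>x. u x - v x) (\<lambda>x. u x - v x)"
  unfolding mse_def ip_def power2_eq_square by (rule refl)

lemma ip_self_nonneg: "0 \<le> ip M u u"
  unfolding ip_def by (rule integral_nonneg_AE) simp

lemma ip_quad:
  assumes "u \<in> L2fun M" "v \<in> L2fun M"
  shows "ip M (\<lambda>x. a * u x + b * v x) (\<lambda>x. a * u x + b * v x)
     = a^2 * ip M u u + 2*a*b * ip M u v + b^2 * ip M v v"
proof -
  have l: "(\<lambda>x. a * u x + b * v x) \<in> L2fun M" using assms by (rule L2_lin)
  have s: "ip M v u = ip M u v" by (rule ip_sym)
  have "ip M (\<lambda>x. a * u x + b * v x) (\<lambda>x. a * u x + b * v x)
      = a * ip M u (\<lambda>x. a * u x + b * v x) + b * ip M v (\<lambda>x. a * u x + b * v x)"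
    using assms l by (rule ip_lin)
  also have "ip M u (\<lambda>x. a * u x + b * v x) = ip M (\<lambda>x. a * u x + b * v x) u"
    by (rule ip_sym)
  also have "\<dots> = a * ip M u u + b * ip M v u"
    by (rule ip_lin[OF assms(1,2,1)])
  also have "ip M v (\<lambda>x. a * u x + b * v x) = ip M (\<lambda>x. a * u x + b * v x) v"
    by (rule ip_sym)
  also have "\<dots> = a * ip M u v + b * ip M v v"
    by (rule ip_lin[OF assms(1,2,2)])
  finally show ?thesis unfolding s by (simp add: power2_eq_square algebra_simps)
qed



definition simp_on :: "nat set \<Rightarrow> (nat \<Rightarrow> real) set" where
  "simp_on A = {q. (\<forall>s\<in>A. 0 \<le> q s) \<and> (\<forall>s. s \<notin> A \<longrightarrow> q s = 0) \<and> sum q A = 1}"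

lemma cont_coord: "continuous_on X (\<lambda>q::nat \<Rightarrow> real. q i)"
  by (rule continuous_on_subset[OF continuous_on_product_coordinates]) simp

lemma simp_on_le1: "finite A \<Longrightarrow> q \<in> simp_on A \<Longrightarrow> s \<in> A \<Longrightarrow> q s \<le> 1"
proof -
  assume a: "finite A" "q \<in> simp_on A" "s \<in> A"
  have "q s \<le> sum q A"
    by (rule member_le_sum) (use a in \<open>auto simp: simp_on_def\<close>)
  then show ?thesis using a by (simp add: simp_on_def)
qed

lemma compact_simp_on:
  assumes "finite A"
  shows "compact (simp_on A)"
proof -
  define P where "P = PiE UNIV (\<lambda>s. if s \<in> A then {0..1::real} else {0})"
  have "compactin (product_topology (\<lambda>i. euclidean) UNIV) P"
    unfolding P_def by (subst compactin_PiE) auto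
  then have cP: "compact P"
    by (simp add: euclidean_product_topology)
  have "closed {q::nat\<Rightarrow>real. \<forall>s. (s \<in> A \<longrightarrow> 0 \<le> q s) \<and> (s \<notin> A \<longrightarrow> q s = 0)}"
    by (intro closed_Collect_all closed_Collect_conj closed_Collect_imp open_Collect_const
        closed_Collect_le closed_Collect_eq cont_coord continuous_on_const)
  moreover have "closed {q::nat\<Rightarrow>real. sum q A = 1}"
    by (intro closed_Collect_eq continuous_on_sum cont_coord continuous_on_const)
  ultimately have "closed ({q::nat\<Rightarrow>real. \<forall>s. (s \<in> A \<longrightarrow> 0 \<le> q s) \<and> (s \<notin> A \<longrightarrow> q s = 0)} \<inter> {q. sum q A = 1})"
    by (rule closed_Int)
  moreover have "simp_on A = P \<inter> ({q::nat\<Rightarrow>real. \<forall>s. (s \<in> A \<longrightarrow> 0 \<le> q s) \<and> (s \<notin> A \<longrightarrow> q s = 0)} \<inter> {q. sum q A = 1})"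
  proof -
    have "q \<in> P" if "q \<in> simp_on A" for q
      using that simp_on_le1[OF assms that] unfolding P_def simp_on_def by (auto simp: PiE_iff)
    then show ?thesis unfolding simp_on_def by auto
  qed
  ultimately show ?thesis using cP by (simp add: compact_Int_closed)
qed

definition ind :: "nat \<Rightarrow> nat \<Rightarrow> real" where "ind s = (\<lambda>t. if t = s then 1 else 0)"

lemma ind_simp_on: "s \<in> A \<Longrightarrow> finite A \<Longrightarrow> ind s \<in> simp_on A"
  unfolding simp_on_def ind_def by auto

lemma simp_on_nonempty: "finite A \<Longrightarrow> A \<noteq> {} \<Longrightarrow> simp_on A \<noteq> {}"
  using ind_simp_on by blast

lemma simp_on_conv:
  assumes "q \<in> simp_on A" "r \<in> simp_on A" "0 \<le> t" "t \<le> 1"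
  shows "(\<lambda>s. (1 - t) * q s + t * r s) \<in> simp_on A"
proof -
  have e: "sum (\<lambda>s. (1 - t) * q s + t * r s) A = (1 - t) * sum q A + t * sum r A"
    by (simp add: sum.distrib sum_distrib_left)
  show ?thesis using assms unfolding simp_on_def by (auto simp: e)
qed

lemma simp_on_prob:
  assumes "A \<subseteq> {1..S}" "q \<in> simp_on A"
  shows "q \<in> prob_simplex S"
proof -
  have "sum q {1..S} = sum q A"
    by (rule sum.mono_neutral_right) (use assms in \<open>auto simp: simp_on_def\<close>)
  moreover have "\<forall>s\<in>{1..S}. 0 \<le> q s"
  proof
    fix s show "0 \<le> q s" using assms(2) unfolding simp_on_def by (cases "s \<in> A") auto
  qed
  moreover have "sum q A = 1" using assms(2) unfolding simp_on_def by simp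
  ultimately show ?thesis by (simp add: prob_simplex_def)
qed

lemma mix_ind: "s \<in> {1..S} \<Longrightarrow> mix S tau (ind s) = tau s"
proof (rule ext)
  fix x assume s: "s \<in> {1..S}"
  have "mix S tau (ind s) x = (\<Sum>t\<in>{1..S}. if t = s then tau t x else 0)"
    by (simp only: mix_def ind_def, rule sum.cong) auto
  also have "\<dots> = tau s x" using s by simp
  finally show "mix S tau (ind s) x = tau s x" .
qed

lemma ind_prob: "s \<in> {1..S} \<Longrightarrow> ind s \<in> prob_simplex S"
  unfolding prob_simplex_def ind_def by auto



declare cont_coord[continuous_intros]

lemma L2_diff: "u \<in> L2fun M \<Longrightarrow> v \<in> L2fun M \<Longrightarrow> (\<lambda>x. u x - v x) \<in> L2fun M"
  using L2_lin[of u M v 1 "-1"] by simp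

lemma mse_int: "u \<in> L2fun M \<Longrightarrow> v \<in> L2fun M \<Longrightarrow> integrable M (\<lambda>x. (u x - v x)^2)"
  using L2_diff L2_sq by blast

lemma mse_sym: "mse M u v = mse M v u"
  unfolding mse_def by (simp add: power2_commute)

lemma ip_mix:
  assumes "\<forall>s\<in>{1..S}. tau s \<in> L2fun M" "w \<in> L2fun M"
  shows "ip M (mix S tau q) w = (\<Sum>s\<in>{1..S}. q s * ip M (tau s) w)"
  unfolding mix_def by (rule ip_sum) (use assms in auto)

lemma mse_mix_formula:
  assumes tau: "\<forall>s\<in>{1..S}. tau s \<in> L2fun M" and g: "g \<in> L2fun M"
  shows "mse M (mix S tau q) g = (\<Sum>s\<in>{1..S}. q s * (\<Sum>t\<in>{1..S}. q t * ip M (tau t) (tau s)))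
          - 2 * (\<Sum>s\<in>{1..S}. q s * ip M (tau s) g) + ip M g g"
proof -
  have m: "mix S tau q \<in> L2fun M" using tau by (rule L2_mix)
  have "mse M (mix S tau q) g = ip M (\<lambda>x. 1 * mix S tau q x + (-1) * g x) (\<lambda>x. 1 * mix S tau q x + (-1) * g x)"
    unfolding mse_ip by simp
  also have "\<dots> = 1^2 * ip M (mix S tau q) (mix S tau q) + 2 * 1 * (-1) * ip M (mix S tau q) g + (-1)^2 * ip M g g"
    by (rule ip_quad[OF m g])
  also have "ip M (mix S tau q) (mix S tau q) = (\<Sum>s\<in>{1..S}. q s * ip M (tau s) (mix S tau q))"
    by (rule ip_mix[OF tau m])
  also have "\<dots> = (\<Sum>s\<in>{1..S}. q s * (\<Sum>t\<in>{1..S}. q t * ip M (tau t) (tau s)))"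
  proof (rule sum.cong)
    fix s assume s: "s \<in> {1..S}"
    have "ip M (tau s) (mix S tau q) = ip M (mix S tau q) (tau s)" by (rule ip_sym)
    also have "\<dots> = (\<Sum>t\<in>{1..S}. q t * ip M (tau t) (tau s))"
      by (rule ip_mix) (use tau s in auto)
    finally show "q s * ip M (tau s) (mix S tau q) = q s * (\<Sum>t\<in>{1..S}. q t * ip M (tau t) (tau s))"
      by simp
  qed simp
  also have "ip M (mix S tau q) g = (\<Sum>s\<in>{1..S}. q s * ip M (tau s) g)"
    by (rule ip_mix[OF tau g])
  finally show ?thesis by simp
qed

lemma cont_mse_mix:
  assumes tau: "\<forall>s\<in>{1..S}. tau s \<in> L2fun M" and g: "g \<in> L2fun M"
  shows "continuous_on X (\<lambda>q. mse M (mix S tau q) g)"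
  unfolding mse_mix_formula[OF tau g] by (intro continuous_intros)

lemma cont_Max:
  assumes "finite I" "I \<noteq> {}" "\<forall>i\<in>I. continuous_on X (g i)"
  shows "continuous_on X (\<lambda>q. Max ((\<lambda>i. g i q :: real) ` I))"
  using assms
proof (induction I rule: finite_ne_induct)
  case (singleton x) then show ?case by simp
next
  case (insert j I)
  have e: "(\<lambda>q. Max ((\<lambda>i. g i q) ` insert j I)) = (\<lambda>q. max (g j q) (Max ((\<lambda>i. g i q) ` I)))"
    using insert(1,2) by (simp add: Max_insert)
  show ?case unfolding e using insert by (intro continuous_on_max) auto
qed

definition W :: "'a measure \<Rightarrow> nat \<Rightarrow> (nat \<Rightarrow> 'a \<Rightarrow> real) \<Rightarrow> ('a \<Rightarrow> real) \<Rightarrow> real" where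
  "W M S tau f = Max ((\<lambda>s. mse M f (tau s)) ` {1..S})"

lemma W_ge: "s \<in> {1..S} \<Longrightarrow> mse M f (tau s) \<le> W M S tau f"
  unfolding W_def by (rule Max_ge) auto

lemma W_att: "S \<ge> 1 \<Longrightarrow> \<exists>s\<in>{1..S}. W M S tau f = mse M f (tau s)"
proof -
  assume "S \<ge> 1"
  then have "W M S tau f \<in> (\<lambda>s. mse M f (tau s)) ` {1..S}"
    unfolding W_def by (intro Max_in) auto
  then show ?thesis by auto
qed

lemma W_le_iff: "S \<ge> 1 \<Longrightarrow> W M S tau f \<le> R \<longleftrightarrow> (\<forall>s\<in>{1..S}. mse M f (tau s) \<le> R)"
  unfolding W_def by (subst Max_le_iff) auto

lemma W_less_iff: "S \<ge> 1 \<Longrightarrow> W M S tau f < R \<longleftrightarrow> (\<forall>s\<in>{1..S}. mse M f (tau s) < R)"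
  unfolding W_def by (subst Max_less_iff) auto

lemma cont_W_mix:
  assumes "S \<ge> 1" "\<forall>s\<in>{1..S}. tau s \<in> L2fun M"
  shows "continuous_on X (\<lambda>q. W M S tau (mix S tau q))"
  unfolding W_def by (rule cont_Max) (use assms in \<open>auto intro: cont_mse_mix\<close>)

lemma mse_mix_le:
  assumes f: "f \<in> L2fun M" and tau: "\<forall>s\<in>{1..S}. tau s \<in> L2fun M"
    and q: "q \<in> prob_simplex S" and S: "S \<ge> 1"
  shows "mse M f (mix S tau q) \<le> (\<Sum>s\<in>{1..S}. q s * mse M f (tau s))"
proof -
  have q0: "\<And>s. s \<in> {1..S} \<Longrightarrow> 0 \<le> q s" and q1: "(\<Sum>s\<in>{1..S}. q s) = 1"
    using q by (auto simp: prob_simplex_def)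
  have pw: "(f x - mix S tau q x)^2 \<le> (\<Sum>s\<in>{1..S}. q s * (f x - tau s x)^2)" for x
  proof -
    have "(\<Sum>s\<in>{1..S}. q s * (f x - tau s x)) = (\<Sum>s\<in>{1..S}. q s) * f x - (\<Sum>s\<in>{1..S}. q s * tau s x)"
      by (simp add: right_diff_distrib sum_subtractf sum_distrib_right)
    then have e: "f x - mix S tau q x = (\<Sum>s\<in>{1..S}. q s *\<^sub>R (f x - tau s x))"
      using q1 by (simp add: mix_def)
    have "(\<Sum>s\<in>{1..S}. q s *\<^sub>R (f x - tau s x))^2 \<le> (\<Sum>s\<in>{1..S}. q s * (f x - tau s x)^2)"
      by (rule convex_on_sum[OF _ _ convex_power2, where a = q and y = "\<lambda>s. f x - tau s x"])
         (use S q0 q1 in auto)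
    then show ?thesis unfolding e .
  qed
  have "mse M f (mix S tau q) \<le> (\<integral>x. (\<Sum>s\<in>{1..S}. q s * (f x - tau s x)^2) \<partial>M)"
    unfolding mse_def
  proof (rule integral_mono)
    show "integrable M (\<lambda>x. (f x - mix S tau q x)\<^sup>2)" by (rule mse_int[OF f L2_mix[OF tau]])
    show "integrable M (\<lambda>x. \<Sum>s\<in>{1..S}. q s * (f x - tau s x)\<^sup>2)"
    proof (rule Bochner_Integration.integrable_sum[where f="\<lambda>s x. q s * (f x - tau s x)\<^sup>2"])
      fix s assume "s \<in> {1..S}"
      then show "integrable M (\<lambda>x. q s * (f x - tau s x)\<^sup>2)"
        using f tau by (intro integrable_mult_right mse_int) auto
    qed
    show "(f x - mix S tau q x)\<^sup>2 \<le> (\<Sum>s\<in>{1..S}. q s * (f x - tau s x)\<^sup>2)" for x by (rule pw)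
  qed
  also have "\<dots> = (\<Sum>s\<in>{1..S}. q s * mse M f (tau s))"
    by (subst Bochner_Integration.integral_sum) (use f tau in \<open>auto intro!: mse_int simp: mse_def\<close>)
  finally show ?thesis .
qed

lemma worst_W:
  assumes f: "f \<in> L2fun M" and tau: "\<forall>s\<in>{1..S}. tau s \<in> L2fun M" and S: "S \<ge> 1"
  shows "worst_risk M S tau f = W M S tau f"
  unfolding worst_risk_def
proof (rule cSup_eq_maximum)
  obtain s where s: "s \<in> {1..S}" "W M S tau f = mse M f (tau s)" using W_att[OF S] by blast
  then have "W M S tau f = mse M f (mix S tau (ind s))" by (simp add: mix_ind)
  then show "W M S tau f \<in> (\<lambda>g. mse M f g) ` cate_set S tau"
    unfolding cate_set_def using ind_prob[OF s(1)] by blast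
next
  fix y assume "y \<in> (\<lambda>g. mse M f g) ` cate_set S tau"
  then obtain q where q: "q \<in> prob_simplex S" and y: "y = mse M f (mix S tau q)"
    unfolding cate_set_def by auto
  have "y \<le> (\<Sum>s\<in>{1..S}. q s * mse M f (tau s))" unfolding y by (rule mse_mix_le[OF f tau q S])
  also have "\<dots> \<le> (\<Sum>s\<in>{1..S}. q s * W M S tau f)"
    by (rule sum_mono, rule mult_left_mono) (use q in \<open>auto simp: prob_simplex_def intro: W_ge\<close>)
  also have "\<dots> = W M S tau f" using q by (simp add: prob_simplex_def sum_distrib_right[symmetric])
  finally show "y \<le> W M S tau f" .
qed



lemma quad_aux:
  fixes c n :: real
  assumes h: "\<forall>t. 0 \<le> t \<and> t \<le> 1 \<longrightarrow> 0 \<le> -2*t*c + t^2*n" and n: "0 \<le> n"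
  shows "c \<le> 0"
proof (rule ccontr)
  assume "\<not> c \<le> 0" then have c: "c > 0" by simp
  show False
  proof (cases "n = 0")
    case True
    then show False using h[rule_format, of 1] c by simp
  next
    case False
    then have n': "n > 0" using n by simp
    define t where "t = min 1 (c / n)"
    have t0: "0 < t" using c n' by (simp add: t_def)
    have t1: "t \<le> 1" by (simp add: t_def)
    have tn: "t * n \<le> c" using n' by (simp add: t_def min_def field_simps)
    have "t^2 * n = t * (t * n)" by (simp add: power2_eq_square)
    also have "\<dots> \<le> t * c" using tn t0 by (simp add: mult_left_mono)
    also have "\<dots> < 2 * t * c" using t0 c by simp
    finally show False using h[rule_format, of t] t0 t1 by simp
  qed
qed

lemma mix_conv:
  "mix S tau (\<lambda>i. a * q i + b * r i) x = a * mix S tau q x + b * mix S tau r x"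
proof -
  have "mix S tau (\<lambda>i. a * q i + b * r i) x = (\<Sum>i\<in>{1..S}. a * (q i * tau i x) + b * (r i * tau i x))"
    unfolding mix_def by (simp add: distrib_right mult.assoc)
  also have "\<dots> = a * mix S tau q x + b * mix S tau r x"
    unfolding mix_def by (simp add: sum.distrib sum_distrib_left)
  finally show ?thesis .
qed

lemma proj:
  assumes f: "f \<in> L2fun M" and tau: "\<forall>s\<in>{1..S}. tau s \<in> L2fun M"
    and A: "A \<subseteq> {1..S}" "A \<noteq> {}"
  shows "\<exists>q\<in>simp_on A. \<forall>s\<in>A. ip M (\<lambda>x. f x - mix S tau q x) (\<lambda>x. tau s x - mix S tau q x) \<le> 0"
proof -
  have fin: "finite A" using A finite_subset by blast
  obtain q0 where q0: "q0 \<in> simp_on A" and mn: "\<And>q. q \<in> simp_on A \<Longrightarrow> mse M (mix S tau q0) f \<le> mse M (mix S tau q) f"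
    using continuous_attains_inf[OF compact_simp_on[OF fin] simp_on_nonempty[OF fin A(2)] cont_mse_mix[OF tau f]]
    by blast
  define p where "p = mix S tau q0"
  have p: "p \<in> L2fun M" unfolding p_def using tau by (rule L2_mix)
  show ?thesis
  proof (intro bexI[OF _ q0] ballI)
    fix s assume s: "s \<in> A"
    then have s': "s \<in> {1..S}" using A by auto
    define e where "e = (\<lambda>x. f x - p x)"
    define d where "d = (\<lambda>x. tau s x - p x)"
    have e: "e \<in> L2fun M" unfolding e_def using f p by (rule L2_diff)
    have d: "d \<in> L2fun M" unfolding d_def using tau s' p by (intro L2_diff) auto
    have mi: "mix S tau (ind s) x = tau s x" for x using mix_ind[OF s'] by metis
    have "\<forall>t. 0 \<le> t \<and> t \<le> 1 \<longrightarrow> 0 \<le> -2*t*ip M e d + t^2*ip M d d"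
    proof (intro allI impI)
      fix t :: real assume t: "0 \<le> t \<and> t \<le> 1"
      define qt where "qt = (\<lambda>i. (1 - t) * q0 i + t * ind s i)"
      have qt: "qt \<in> simp_on A" unfolding qt_def
        using simp_on_conv[OF q0 ind_simp_on[OF s fin]] t by auto
      have mq: "mix S tau qt x = p x + t * d x" for x
        unfolding qt_def mix_conv p_def d_def using mi by (simp add: algebra_simps)
      have "mse M (mix S tau qt) f = mse M f (mix S tau qt)" by (rule mse_sym)
      also have "\<dots> = ip M (\<lambda>x. 1 * e x + (-t) * d x) (\<lambda>x. 1 * e x + (-t) * d x)"
        unfolding mse_ip mq e_def by (simp add: algebra_simps)
      also have "\<dots> = ip M e e - 2*t*ip M e d + t^2 * ip M d d"
        unfolding ip_quad[OF e d] by simp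
      finally have 1: "mse M (mix S tau qt) f = ip M e e - 2*t*ip M e d + t^2 * ip M d d" .
      have 2: "mse M (mix S tau q0) f = ip M e e"
        unfolding e_def p_def mse_ip[symmetric] by (rule mse_sym)
      show "0 \<le> -2*t*ip M e d + t^2*ip M d d" using mn[OF qt] 1 2 by simp
    qed
    then have "ip M e d \<le> 0" using ip_self_nonneg by (intro quad_aux) auto
    then show "ip M (\<lambda>x. f x - mix S tau q0 x) (\<lambda>x. tau s x - mix S tau q0 x) \<le> 0"
      unfolding e_def d_def p_def .
  qed
qed

lemma proj_mse:
  assumes f: "f \<in> L2fun M" and tau: "\<forall>s\<in>{1..S}. tau s \<in> L2fun M"
    and s: "s \<in> {1..S}" and V: "ip M (\<lambda>x. f x - p x) (\<lambda>x. tau s x - p x) \<le> 0"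
    and p: "p \<in> L2fun M"
  shows "mse M f p + mse M p (tau s) \<le> mse M f (tau s)"
proof -
  define e where "e = (\<lambda>x. f x - p x)"
  define d where "d = (\<lambda>x. tau s x - p x)"
  have e: "e \<in> L2fun M" unfolding e_def using f p by (rule L2_diff)
  have d: "d \<in> L2fun M" unfolding d_def using tau s p by (intro L2_diff) auto
  have "mse M f (tau s) = ip M (\<lambda>x. 1 * e x + (-1) * d x) (\<lambda>x. 1 * e x + (-1) * d x)"
    unfolding mse_ip e_def d_def by simp
  also have "\<dots> = ip M e e - 2 * ip M e d + ip M d d"
    unfolding ip_quad[OF e d] by simp
  finally have 1: "mse M f (tau s) = ip M e e - 2 * ip M e d + ip M d d" .
  have 2: "mse M f p = ip M e e" unfolding mse_ip e_def ..
  have 3: "mse M p (tau s) = ip M d d" unfolding d_def mse_ip[symmetric] by (rule mse_sym)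
  show ?thesis using 1 2 3 V unfolding e_def d_def by simp
qed



lemma mse_nonneg: "0 \<le> mse M u v"
  unfolding mse_ip by (rule ip_self_nonneg)

lemma AE_eq_mse:
  assumes "u \<in> L2fun M" "v \<in> L2fun M" "mse M u v = 0"
  shows "AE x in M. u x = v x"
proof -
  have "AE x in M. (u x - v x)^2 = 0"
    using assms(3) unfolding mse_def
    by (subst (asm) integral_nonneg_eq_0_iff_AE) (use assms in \<open>auto intro: mse_int\<close>)
  then show ?thesis by (rule AE_mp) auto
qed

lemma mse_cong_AE:
  assumes "u \<in> L2fun M" "v \<in> L2fun M" "g \<in> L2fun M" "AE x in M. u x = v x"
  shows "mse M u g = mse M v g"
  unfolding mse_def
proof (rule integral_cong_AE)
  show "(\<lambda>x. (u x - g x)\<^sup>2) \<in> borel_measurable M"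
    using mse_int[OF assms(1,3)] by (rule borel_measurable_integrable)
  show "(\<lambda>x. (v x - g x)\<^sup>2) \<in> borel_measurable M"
    using mse_int[OF assms(2,3)] by (rule borel_measurable_integrable)
  show "AE x in M. (u x - g x)\<^sup>2 = (v x - g x)\<^sup>2"
    using assms(4) by (rule AE_mp) auto
qed

lemma prob_conv:
  assumes "q \<in> prob_simplex S" "r \<in> prob_simplex S" "0 \<le> t" "t \<le> 1"
  shows "(\<lambda>s. (1 - t) * q s + t * r s) \<in> prob_simplex S"
proof -
  have e: "sum (\<lambda>s. (1 - t) * q s + t * r s) {1..S} = (1 - t) * sum q {1..S} + t * sum r {1..S}"
    by (simp add: sum.distrib sum_distrib_left)
  have s1: "sum q {1..S} = 1" "sum r {1..S} = 1" using assms(1,2) by (auto simp: prob_simplex_def)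
  have "sum (\<lambda>s. (1 - t) * q s + t * r s) {1..S} = 1" unfolding e s1 by simp
  moreover have "\<forall>s\<in>{1..S}. 0 \<le> (1 - t) * q s + t * r s"
    using assms unfolding prob_simplex_def by auto
  ultimately show ?thesis unfolding prob_simplex_def by blast
qed

lemma projF:
  assumes f: "f \<in> L2fun M" and tau: "\<forall>s\<in>{1..S}. tau s \<in> L2fun M" and S: "S \<ge> 1"
  shows "\<exists>q\<in>simp_on {1..S}. q \<in> prob_simplex S \<and> W M S tau (mix S tau q) + mse M f (mix S tau q) \<le> W M S tau f"
proof -
  obtain q where q: "q \<in> simp_on {1..S}"
    and V: "\<forall>s\<in>{1..S}. ip M (\<lambda>x. f x - mix S tau q x) (\<lambda>x. tau s x - mix S tau q x) \<le> 0"
    using proj[OF f tau, of "{1..S}"] S by auto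
  have p: "mix S tau q \<in> L2fun M" using tau by (rule L2_mix)
  have "W M S tau (mix S tau q) \<le> W M S tau f - mse M f (mix S tau q)"
    unfolding W_le_iff[OF S]
  proof
    fix s assume s: "s \<in> {1..S}"
    have "mse M f (mix S tau q) + mse M (mix S tau q) (tau s) \<le> mse M f (tau s)"
      using proj_mse[OF f tau s _ p] V s by blast
    moreover have "mse M f (tau s) \<le> W M S tau f" using s by (rule W_ge)
    ultimately show "mse M (mix S tau q) (tau s) \<le> W M S tau f - mse M f (mix S tau q)" by simp
  qed
  moreover have "q \<in> prob_simplex S" using simp_on_prob[OF _ q] by simp
  ultimately show ?thesis using q by force
qed



theorem proposition1:
  fixes M :: "'a measure" and S :: nat and tau :: "nat \<Rightarrow> 'a \<Rightarrow> real"
    and F :: "('a \<Rightarrow> real) set"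
  assumes "prob_space M"
    and "S \<ge> 1"
    and "\<forall>s\<in>{1..S}. tau s \<in> L2fun M"
    and "F \<subseteq> L2fun M"
    and "\<forall>q\<in>prob_simplex S. mix S tau q \<in> F"
  shows "epi_argmin M S tau F = {(f, worst_risk M S tau f) | f. f \<in> regret_argmin M S tau F}
       \<and> epi_argmin M S tau F \<noteq> {}
       \<and> (\<forall>(f, R) \<in> epi_argmin M S tau F. \<exists>q \<in> prob_simplex S.
            (AE x in M. f x = mix S tau q x)
          \<and> (\<forall>s\<in>{1..S}. q s * (mse M f (tau s) - R) = 0)
          \<and> (\<forall>s\<in>{1..S}. mse M f (tau s) \<le> R))"
proof -
  note S = assms(2) and tau = assms(3) and FL = assms(4) and hull = assms(5)
  have fL: "f \<in> L2fun M" if "f \<in> F" for f using FL that by blast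
  have wr: "worst_risk M S tau f = W M S tau f" if "f \<in> F" for f
    using worst_W[OF fL[OF that] tau S] .
  have char: "(f, R) \<in> epi_argmin M S tau F \<longleftrightarrow> f \<in> F \<and> R = W M S tau f \<and> (\<forall>g\<in>F. W M S tau f \<le> W M S tau g)"
    for f R
  proof
    assume a: "(f, R) \<in> epi_argmin M S tau F"
    then have fF: "f \<in> F" and c: "\<forall>s\<in>{1..S}. mse M f (tau s) \<le> R"
      and mn: "\<forall>(g, R') \<in> epi_feasible M S tau F. R \<le> R'"
      unfolding epi_argmin_def epi_feasible_def by auto
    have WR: "W M S tau f \<le> R" using c W_le_iff[OF S, of M tau f R] by blast
    have g: "R \<le> W M S tau g" if "g \<in> F" for g
    proof -
      have "(g, W M S tau g) \<in> epi_feasible M S tau F"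
        unfolding epi_feasible_def using that W_ge[of _ S M g tau] by auto
      then show ?thesis using mn by auto
    qed
    show "f \<in> F \<and> R = W M S tau f \<and> (\<forall>g\<in>F. W M S tau f \<le> W M S tau g)"
      using fF WR g[OF fF] g by force
  next
    assume a: "f \<in> F \<and> R = W M S tau f \<and> (\<forall>g\<in>F. W M S tau f \<le> W M S tau g)"
    have feas: "(f, R) \<in> epi_feasible M S tau F"
      unfolding epi_feasible_def using a W_ge[of _ S M f tau] by auto
    have "R \<le> R'" if "(g, R') \<in> epi_feasible M S tau F" for g R'
    proof -
      have "g \<in> F" "\<forall>s\<in>{1..S}. mse M g (tau s) \<le> R'" using that unfolding epi_feasible_def by auto
      then show ?thesis using a W_le_iff[OF S, of M tau g R'] by force
    qed
    then show "(f, R) \<in> epi_argmin M S tau F"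
      unfolding epi_argmin_def using feas by auto
  qed
  have ra: "f \<in> regret_argmin M S tau F \<longleftrightarrow> f \<in> F \<and> (\<forall>g\<in>F. W M S tau f \<le> W M S tau g)" for f
    unfolding regret_argmin_def using wr by auto
  have part1: "epi_argmin M S tau F = {(f, worst_risk M S tau f) | f. f \<in> regret_argmin M S tau F}"
  proof (rule set_eqI)
    fix z :: "('a \<Rightarrow> real) \<times> real"
    obtain f R where z: "z = (f, R)" by (cases z)
    show "z \<in> epi_argmin M S tau F \<longleftrightarrow> z \<in> {(f, worst_risk M S tau f) | f. f \<in> regret_argmin M S tau F}"
      unfolding z char using ra wr by auto
  qed
  obtain qs where qs: "qs \<in> simp_on {1..S}"
    and mnq: "\<forall>q\<in>simp_on {1..S}. W M S tau (mix S tau qs) \<le> W M S tau (mix S tau q)"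
    using continuous_attains_inf[OF compact_simp_on[of "{1..S}"] simp_on_nonempty cont_W_mix[OF S tau]] S
    by auto
  have fsF: "mix S tau qs \<in> F" using hull simp_on_prob[OF _ qs] by auto
  have opt: "W M S tau (mix S tau qs) \<le> W M S tau g" if g: "g \<in> F" for g
  proof -
    obtain q where q: "q \<in> simp_on {1..S}"
      and le: "W M S tau (mix S tau q) + mse M g (mix S tau q) \<le> W M S tau g"
      using projF[OF fL[OF g] tau S] by auto
    show ?thesis using mnq q le mse_nonneg[of M g "mix S tau q"] by force
  qed
  have part2: "epi_argmin M S tau F \<noteq> {}"
    using char[of "mix S tau qs" "W M S tau (mix S tau qs)"] fsF opt by auto
  have part3: "\<exists>q \<in> prob_simplex S. (AE x in M. f x = mix S tau q x)
          \<and> (\<forall>s\<in>{1..S}. q s * (mse M f (tau s) - R) = 0)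
          \<and> (\<forall>s\<in>{1..S}. mse M f (tau s) \<le> R)"
    if fR: "(f, R) \<in> epi_argmin M S tau F" for f R
  proof -
    have fF: "f \<in> F" and RW: "R = W M S tau f" and fmin: "\<forall>g\<in>F. W M S tau f \<le> W M S tau g"
      using fR char by auto
    have f: "f \<in> L2fun M" using fL[OF fF] .
    have cons: "\<forall>s\<in>{1..S}. mse M f (tau s) \<le> R" unfolding RW using W_ge[of _ S M f tau] by blast
    obtain q0 where q0s: "q0 \<in> simp_on {1..S}" and q0: "q0 \<in> prob_simplex S"
      and le0: "W M S tau (mix S tau q0) + mse M f (mix S tau q0) \<le> W M S tau f"
      using projF[OF f tau S] by auto
    define p0 where "p0 = mix S tau q0"
    have p0L: "p0 \<in> L2fun M" unfolding p0_def using tau by (rule L2_mix)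
    have p0F: "p0 \<in> F" unfolding p0_def using hull q0 by auto
    have "mse M f p0 = 0"
      using le0 fmin p0F mse_nonneg[of M f p0] unfolding p0_def by force
    then have AEf: "AE x in M. f x = p0 x" by (rule AE_eq_mse[OF f p0L])
    have meq: "mse M f (tau s) = mse M p0 (tau s)" if "s \<in> {1..S}" for s
      using mse_cong_AE[OF f p0L _ AEf] tau that by auto
    have "(\<lambda>s. mse M f (tau s)) ` {1..S} = (\<lambda>s. mse M p0 (tau s)) ` {1..S}"
      by (intro image_cong refl meq)
    then have Wp0: "W M S tau p0 = R"
      unfolding RW W_def by simp
    define A where "A = {s\<in>{1..S}. mse M p0 (tau s) = R}"
    have AS: "A \<subseteq> {1..S}" unfolding A_def by auto
    have Ane: "A \<noteq> {}" using W_att[OF S, of M tau p0] Wp0 unfolding A_def by auto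
    obtain q' where q's: "q' \<in> simp_on A"
      and V: "\<forall>s\<in>A. ip M (\<lambda>x. p0 x - mix S tau q' x) (\<lambda>x. tau s x - mix S tau q' x) \<le> 0"
      using proj[OF p0L tau AS Ane] by blast
    have q': "q' \<in> prob_simplex S" using simp_on_prob[OF AS q's] .
    define p' where "p' = mix S tau q'"
    have p'L: "p' \<in> L2fun M" unfolding p'_def using tau by (rule L2_mix)
    define d where "d = (\<lambda>x. p0 x - p' x)"
    have dL: "d \<in> L2fun M" unfolding d_def using p0L p'L by (rule L2_diff)
    define n where "n = ip M d d"
    have n_mse: "n = mse M p0 p'" unfolding n_def d_def mse_ip ..
    show ?thesis
    proof (cases "n = 0")
      case True
      then have "AE x in M. p0 x = p' x" using AE_eq_mse[OF p0L p'L] n_mse by simp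
      then have AEf': "AE x in M. f x = mix S tau q' x"
        using AEf unfolding p'_def by (rule AE_mp[OF _ AE_mp]) auto
      have comp: "\<forall>s\<in>{1..S}. q' s * (mse M f (tau s) - R) = 0"
      proof
        fix s assume s: "s \<in> {1..S}"
        show "q' s * (mse M f (tau s) - R) = 0"
        proof (cases "s \<in> A")
          case True then show ?thesis using meq[OF s] unfolding A_def by simp
        next
          case False then show ?thesis using q's unfolding simp_on_def by simp
        qed
      qed
      show ?thesis using q' AEf' comp cons by blast
    next
      case False
      then have npos: "n > 0" using ip_self_nonneg[of M d] unfolding n_def by linarith
      define c where "c = (\<lambda>s. ip M (\<lambda>x. p0 x - tau s x) d)"
      define g where "g = (\<lambda>e. mix S tau (\<lambda>i. (1 - e) * q0 i + e * q' i))"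
      have gx: "g e x - tau s x = 1 * (p0 x - tau s x) + (-e) * d x" for e x s
        unfolding g_def mix_conv p0_def p'_def d_def by (simp add: algebra_simps)
      have gmse: "mse M (g e) (tau s) = mse M p0 (tau s) - 2 * e * c s + e^2 * n"
        if s: "s \<in> {1..S}" for e s
      proof -
        have u: "(\<lambda>x. p0 x - tau s x) \<in> L2fun M" using p0L tau s by (intro L2_diff) auto
        have "mse M (g e) (tau s) = ip M (\<lambda>x. 1 * (p0 x - tau s x) + (-e) * d x) (\<lambda>x. 1 * (p0 x - tau s x) + (-e) * d x)"
          unfolding mse_ip by (simp only: gx)
        also have "\<dots> = ip M (\<lambda>x. p0 x - tau s x) (\<lambda>x. p0 x - tau s x) - 2 * e * c s + e^2 * n"
          unfolding ip_quad[OF u dL] c_def n_def by simp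
        finally show ?thesis unfolding mse_ip .
      qed
      have cA: "n \<le> c s" if s: "s \<in> A" for s
      proof -
        have s': "s \<in> {1..S}" using s AS by auto
        define h where "h = (\<lambda>x. tau s x - p' x)"
        have hL: "h \<in> L2fun M" unfolding h_def using tau s' p'L by (intro L2_diff) auto
        have "c s = ip M (\<lambda>x. 1 * d x + (-1) * h x) d"
          unfolding c_def d_def h_def by simp
        also have "\<dots> = ip M d d - ip M h d" using ip_lin[OF dL hL dL, of 1 "-1"] by simp
        finally have "c s = n - ip M d h" unfolding n_def using ip_sym[of M h d] by simp
        moreover have "ip M d h \<le> 0" using V s unfolding d_def h_def p'_def by blast
        ultimately show ?thesis by simp
      qed
      have ev1: "\<forall>\<^sub>F e in at_right (0::real). 0 < e" by (rule eventually_at_right_less)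
      have ev2: "\<forall>\<^sub>F e in at_right (0::real). e < 1"
        by (rule order_tendstoD(2)[OF tendsto_ident_at]) simp
      have ev3: "\<forall>\<^sub>F e in at_right (0::real). \<forall>s\<in>{1..S} - A. mse M p0 (tau s) - 2 * e * c s + e^2 * n < R"
      proof (rule eventually_ball_finite)
        show "finite ({1..S} - A)" by simp
        show "\<forall>s\<in>{1..S} - A. \<forall>\<^sub>F e in at_right 0. mse M p0 (tau s) - 2 * e * c s + e^2 * n < R"
        proof
          fix s assume s: "s \<in> {1..S} - A"
          have "mse M p0 (tau s) \<le> R" using W_ge[of s S M p0 tau] Wp0 s by auto
          then have lt: "mse M p0 (tau s) < R" using s unfolding A_def by auto
          have "((\<lambda>e. mse M p0 (tau s) - 2 * e * c s + e^2 * n) \<longlongrightarrow> mse M p0 (tau s) - 2 * 0 * c s + 0^2 * n) (at_right 0)"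
            by (intro tendsto_intros)
          then have "((\<lambda>e. mse M p0 (tau s) - 2 * e * c s + e^2 * n) \<longlongrightarrow> mse M p0 (tau s)) (at_right 0)"
            by simp
          then show "\<forall>\<^sub>F e in at_right 0. mse M p0 (tau s) - 2 * e * c s + e^2 * n < R"
            using lt by (rule order_tendstoD(2))
        qed
      qed
      have "\<forall>\<^sub>F e in at_right (0::real). 0 < e \<and> e < 1 \<and> (\<forall>s\<in>{1..S} - A. mse M p0 (tau s) - 2 * e * c s + e^2 * n < R)"
        using eventually_conj[OF ev1 eventually_conj[OF ev2 ev3]] by simp
      then obtain e where e0: "0 < e" and e1: "e < 1"
        and eI: "\<forall>s\<in>{1..S} - A. mse M p0 (tau s) - 2 * e * c s + e^2 * n < R"
        using eventually_happens[of _ "at_right (0::real)"] by (auto simp: trivial_limit_def[symmetric])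
      have lt: "mse M (g e) (tau s) < R" if s: "s \<in> {1..S}" for s
      proof (cases "s \<in> A")
        case True
        have mR: "mse M p0 (tau s) = R" using True unfolding A_def by simp
        have "e * (e * n) < 2 * (e * n)" using e0 e1 npos by (intro mult_strict_right_mono) auto
        then have 1: "e^2 * n < 2 * e * n" by (simp add: power2_eq_square algebra_simps)
        have "2 * e * n \<le> 2 * e * c s" using cA[OF True] e0 by (intro mult_left_mono) auto
        then show ?thesis unfolding gmse[OF s] mR using 1 by linarith
      next
        case False
        then show ?thesis unfolding gmse[OF s] using eI s by auto
      qed
      have "W M S tau (g e) < R" unfolding W_less_iff[OF S] using lt by blast
      moreover have "g e \<in> F" unfolding g_def using hull prob_conv[OF q0 q'] e0 e1 by auto
      ultimately show ?thesis using fmin RW by force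
    qed
  qed
  show ?thesis using part1 part2 part3 by blast
qed


end
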